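(* For any real continuous function $f\in C(\Omega)$, if $|Kf-f|_\infty\le 1$ then $\|[\mathcal D,\pi(M_f)]\|\le 1$.
   Context: $\Omega=\{0,1\}^{\mathbb N}$ with the shift $\sigma$; for $a\in\{0,1\}$, $ax=(a,x_1,\dots)$. $\mu$ is the measure of maximal entropy (uniform Bernoulli product measure), $L^2(\mu)$ the Hilbert space of square-integrable functions. $|\cdot|_\infty$ is the supremum norm. Ruelle operator $L\phi(x)=\frac12(\phi(0x)+\phi(1x))$; Koopman operator $K\phi=\phi\circ\sigma$. $M_f$ is multiplication $g\mapsto fg$. On $\mathcal H=L^2(\mu)\times L^2(\mu)$ (norm $|(\phi_1,\phi_2)|^2=|\phi_1|^2+|\phi_2|^2$), $\mathcal D=\begin{pmatrix}0&K\\ L&0\end{pmatrix}$, $\pi(A)=\begin{pmatrix}A&0\\0&A\end{pmatrix}$, $[\mathcal D,\pi(A)]=\mathcal D\pi(A)-\pi(A)\mathcal D$; $\|\cdot\|$ is the operator norm. *)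

theory Defs
  imports "HOL-Probability.Probability"
begin

text \<open>Omega = {0,1}^N, modelled as nat => bool (False = 0, True = 1), carrying the
product topology (Function_Topology) of the discrete space bool.\<close>

type_synonym omega = "nat \<Rightarrow> bool"

definition shift :: "omega \<Rightarrow> omega" where
  "shift x = (\<lambda>n. x (Suc n))"

definition prepend :: "bool \<Rightarrow> omega \<Rightarrow> omega" where
  "prepend a x = (\<lambda>n. case n of 0 \<Rightarrow> a | Suc m \<Rightarrow> x m)"

definition mu :: "omega measure" where
  "mu = PiM UNIV (\<lambda>_::nat. measure_pmf (pmf_of_set (UNIV :: bool set)))"

definition L2 :: "(omega \<Rightarrow> complex) set" where
  "L2 = {\<phi>. \<phi> \<in> borel_measurable mu \<and> integrable mu (\<lambda>x. (cmod (\<phi> x))\<^sup>2)}"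

definition L2norm :: "(omega \<Rightarrow> complex) \<Rightarrow> real" where
  "L2norm \<phi> = sqrt (\<integral>x. (cmod (\<phi> x))\<^sup>2 \<partial>mu)"

definition Ruelle :: "(omega \<Rightarrow> complex) \<Rightarrow> (omega \<Rightarrow> complex)" where
  "Ruelle \<phi> = (\<lambda>x. (\<phi> (prepend False x) + \<phi> (prepend True x)) / 2)"

definition Koopman :: "(omega \<Rightarrow> 'a) \<Rightarrow> (omega \<Rightarrow> 'a)" where
  "Koopman \<phi> = \<phi> \<circ> shift"

definition Mult :: "(omega \<Rightarrow> real) \<Rightarrow> (omega \<Rightarrow> complex) \<Rightarrow> (omega \<Rightarrow> complex)" where
  "Mult f g = (\<lambda>x. complex_of_real (f x) * g x)"

type_synonym hvec = "(omega \<Rightarrow> complex) \<times> (omega \<Rightarrow> complex)"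

definition Hspace :: "hvec set" where
  "Hspace = L2 \<times> L2"

definition Hnorm :: "hvec \<Rightarrow> real" where
  "Hnorm p = sqrt ((L2norm (fst p))\<^sup>2 + (L2norm (snd p))\<^sup>2)"

definition Dirac :: "hvec \<Rightarrow> hvec" where
  "Dirac p = (Koopman (snd p), Ruelle (fst p))"

definition piop :: "((omega \<Rightarrow> complex) \<Rightarrow> (omega \<Rightarrow> complex)) \<Rightarrow> hvec \<Rightarrow> hvec" where
  "piop A p = (A (fst p), A (snd p))"

definition commutator :: "(hvec \<Rightarrow> hvec) \<Rightarrow> (hvec \<Rightarrow> hvec) \<Rightarrow> hvec \<Rightarrow> hvec" where
  "commutator T S p =
     ((\<lambda>x. fst (T (S p)) x - fst (S (T p)) x), (\<lambda>x. snd (T (S p)) x - snd (S (T p)) x))"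

definition opnorm :: "(hvec \<Rightarrow> hvec) \<Rightarrow> real" where
  "opnorm T = Sup {Hnorm (T p) | p. p \<in> Hspace \<and> Hnorm p \<le> 1}"

end

theory Submission
  imports Defs
begin

abbreviation "B \<equiv> measure_pmf (pmf_of_set (UNIV :: bool set))"

lemma seqsp: "sequence_space B"
  unfolding sequence_space_def product_prob_space_def product_prob_space_axioms_def product_sigma_finite_def
  by (auto simp: prob_space_measure_pmf prob_space_imp_sigma_finite)

lemma prepend_eq: "prepend a x = case_nat a x"
  unfolding prepend_def by (rule ext) (simp split: nat.split)

lemma mu_prepend:
  assumes h: "h \<in> borel_measurable mu"
  shows "(\<integral>\<^sup>+x. h x \<partial>mu) = (\<integral>\<^sup>+x. (h (prepend False x) + h (prepend True x)) / 2 \<partial>mu)"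
proof -
  interpret sequence_space B by (rule seqsp)
  have muS: "mu = S" unfolding mu_def ..
  have sf: "sigma_finite_measure mu" unfolding muS
    by (intro prob_space_imp_sigma_finite prob_space_PiM prob_space_measure_pmf)
  have meas: "(\<lambda>(s, \<omega>). case_nat s \<omega>) \<in> measurable (B \<Otimes>\<^sub>M S) S"
    by measurable
  have "(\<integral>\<^sup>+x. h x \<partial>mu) = (\<integral>\<^sup>+x. h x \<partial>(distr (B \<Otimes>\<^sub>M S) S (\<lambda>(s, \<omega>). case_nat s \<omega>)))"
    using PiM_iter muS by simp
  also have "\<dots> = (\<integral>\<^sup>+x. h (case_prod case_nat x) \<partial>(B \<Otimes>\<^sub>M S))"
    by (rule nn_integral_distr[OF meas]) (use h muS in simp)
  also have "\<dots> = (\<integral>\<^sup>+s. \<integral>\<^sup>+\<omega>. h (case_nat s \<omega>) \<partial>S \<partial>B)"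
    apply (subst sigma_finite_measure.nn_integral_fst[symmetric])
    using h muS meas sf by (auto intro: measurable_compose)
  also have "\<dots> = ((\<integral>\<^sup>+\<omega>. h (case_nat False \<omega>) \<partial>S) + (\<integral>\<^sup>+\<omega>. h (case_nat True \<omega>) \<partial>S)) / 2"
    by (simp add: nn_integral_pmf_of_set UNIV_bool add.commute)
  also have "\<dots> = (\<integral>\<^sup>+x. (h (prepend False x) + h (prepend True x)) / 2 \<partial>mu)"
  proof -
    have cm: "(\<lambda>x. case_nat a x) \<in> S \<rightarrow>\<^sub>M S" for a :: bool
    proof -
      have "(\<lambda>x. (\<lambda>(s, \<omega>). case_nat s \<omega>) (a, x)) \<in> S \<rightarrow>\<^sub>M S"
        by (rule measurable_compose[OF measurable_Pair1' meas]) simp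
      then show ?thesis by simp
    qed
    have hm: "(\<lambda>x. h (case_nat a x)) \<in> borel_measurable S" for a
      using measurable_compose[OF cm h[unfolded muS]] .
    show ?thesis
      unfolding muS prepend_eq divide_ennreal_def
      by (subst nn_integral_multc) (auto simp: nn_integral_add hm intro!: borel_measurable_add)
  qed
  finally show ?thesis .
qed

lemma shift_prepend[simp]: "shift (prepend a x) = x"
  unfolding shift_def prepend_def by simp

lemma shift_meas: "shift \<in> mu \<rightarrow>\<^sub>M mu"
  unfolding shift_def mu_def by (rule measurable_PiM_single') (auto simp: space_PiM)

lemma half_double: "((a::ennreal) + a) / 2 = a"
proof -
  have "a + a = a * 2" by (simp add: mult_2_right)
  then show ?thesis by (simp add: mult_divide_eq_ennreal)
qed

lemma mu_shift:
  assumes h: "h \<in> borel_measurable mu"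
  shows "(\<integral>\<^sup>+x. h (shift x) \<partial>mu) = (\<integral>\<^sup>+x. h x \<partial>mu)"
  using mu_prepend[OF measurable_compose[OF shift_meas h]] by (simp add: half_double)


lemma compact_omega: "compact (UNIV :: omega set)"
proof -
  have "compact_space (euclidean :: bool topology)"
    by (simp add: compact_space_def finite_imp_compact)
  then have "compact_space (product_topology (\<lambda>_::nat. (euclidean::bool topology)) UNIV)"
    by (simp add: compact_space_product_topology)
  then show ?thesis
    by (metis euclidean_product_topology compact_space_def compactin_euclidean_iff topspace_euclidean)
qed

lemma shift_cont: "continuous_on UNIV shift"
  unfolding shift_def by (intro continuous_on_coordinatewise_then_product continuous_on_product_coordinates)

lemma pointwise_bound:
  fixes f :: "omega \<Rightarrow> real"
  assumes "continuous_on UNIV f"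
    and "(SUP x. \<bar>Koopman f x - f x\<bar>) \<le> 1"
  shows "\<bar>f (shift y) - f y\<bar> \<le> 1"
proof -
  have c: "continuous_on UNIV (\<lambda>x. \<bar>f (shift x) - f x\<bar>)"
    using assms(1) shift_cont
    by (intro continuous_intros) (auto intro: continuous_on_compose2[of UNIV f UNIV shift])
  have "compact ((\<lambda>x. \<bar>f (shift x) - f x\<bar>) ` UNIV)"
    by (rule compact_continuous_image[OF c compact_omega])
  then have "bdd_above ((\<lambda>x. \<bar>f (shift x) - f x\<bar>) ` UNIV)"
    by (simp add: bounded_imp_bdd_above compact_imp_bounded)
  then have "\<bar>f (shift y) - f y\<bar> \<le> (SUP x. \<bar>Koopman f x - f x\<bar>)"
    unfolding Koopman_def o_def by (intro cSUP_upper) auto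
  with assms(2) show ?thesis by simp
qed

lemma sq_le_nn: "(L2norm \<phi>)\<^sup>2 \<le> enn2real (\<integral>\<^sup>+x. ennreal ((cmod (\<phi> x))\<^sup>2) \<partial>mu)"
proof (cases "integrable mu (\<lambda>x. (cmod (\<phi> x))\<^sup>2)")
  case True
  then show ?thesis unfolding L2norm_def
    by (simp add: integral_eq_nn_integral integral_nonneg)
next
  case False
  then show ?thesis unfolding L2norm_def
    by (simp add: not_integrable_integral_eq enn2real_nonneg)
qed

lemma L2_nn: "\<phi> \<in> L2 \<Longrightarrow> (\<integral>\<^sup>+x. ennreal ((cmod (\<phi> x))\<^sup>2) \<partial>mu) = ennreal ((L2norm \<phi>)\<^sup>2)"
  unfolding L2_def L2norm_def
  by (simp add: nn_integral_eq_integral integral_nonneg)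

lemma L2_meas: "\<phi> \<in> L2 \<Longrightarrow> (\<lambda>x. ennreal ((cmod (\<phi> x))\<^sup>2)) \<in> borel_measurable mu"
  unfolding L2_def by auto


lemma ennreal_half: "0 \<le> X \<Longrightarrow> 0 \<le> Y \<Longrightarrow> ennreal ((X + Y) / 2) = (ennreal X + ennreal Y) / 2"
proof -
  assume a: "0 \<le> X" "0 \<le> Y"
  have "ennreal (X + Y) / ennreal 2 = ennreal ((X + Y) / 2)"
    by (rule divide_ennreal) (use a in auto)
  moreover have "ennreal (X + Y) = ennreal X + ennreal Y"
    by (rule ennreal_plus) (use a in auto)
  moreover have "ennreal 2 = 2" by simp
  ultimately show ?thesis by metis
qed

lemma real_half_bound:
  fixes u v :: complex and \<alpha> \<beta> :: real
  assumes "\<bar>\<alpha>\<bar> \<le> 1" "\<bar>\<beta>\<bar> \<le> 1"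
  shows "(cmod ((of_real \<alpha> * u + of_real \<beta> * v) / 2))\<^sup>2 \<le> ((cmod u)\<^sup>2 + (cmod v)\<^sup>2) / 2"
proof -
  have "cmod ((of_real \<alpha> * u + of_real \<beta> * v) / 2) \<le> (cmod (of_real \<alpha> * u) + cmod (of_real \<beta> * v)) / 2"
    by (simp add: norm_triangle_ineq norm_divide)
  also have "\<dots> \<le> (cmod u + cmod v) / 2"
    using assms by (simp add: norm_mult mult_left_le_one_le divide_right_mono add_mono mult_le_one)
  finally have h: "cmod ((of_real \<alpha> * u + of_real \<beta> * v) / 2) \<le> (cmod u + cmod v) / 2" .
  have "(cmod ((of_real \<alpha> * u + of_real \<beta> * v) / 2))\<^sup>2 \<le> ((cmod u + cmod v) / 2)\<^sup>2"
    by (rule power_mono[OF h]) simp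
  also have "\<dots> \<le> ((cmod u)\<^sup>2 + (cmod v)\<^sup>2) / 2"
  proof -
    have e: "((cmod u + cmod v) / 2)\<^sup>2 = ((cmod u)\<^sup>2 + (cmod v)\<^sup>2) / 2 - ((cmod u - cmod v) / 2)\<^sup>2"
      by (simp add: power2_eq_square field_simps)
    show ?thesis unfolding e using zero_le_power2[of "(cmod u - cmod v) / 2"] by linarith
  qed
  finally show ?thesis .
qed

lemma real_one_bound:
  fixes u :: complex and \<alpha> :: real
  assumes "\<bar>\<alpha>\<bar> \<le> 1"
  shows "(cmod (of_real \<alpha> * u))\<^sup>2 \<le> (cmod u)\<^sup>2"
proof -
  have "cmod (of_real \<alpha> * u) \<le> cmod u" using assms
    by (simp add: norm_mult mult_left_le_one_le)
  then show ?thesis by (rule power_mono) simp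
qed


theorem corollary2p17:
  fixes f :: "omega \<Rightarrow> real"
  assumes "continuous_on UNIV f"
    and "(SUP x. \<bar>Koopman f x - f x\<bar>) \<le> 1"
  shows "opnorm (commutator Dirac (piop (Mult f))) \<le> 1"
proof -
  let ?T = "commutator Dirac (piop (Mult f))"
  have g1: "\<And>y. \<bar>f (shift y) - f y\<bar> \<le> 1" using pointwise_bound[OF assms] .
  have bound: "Hnorm (?T p) \<le> 1" if p: "p \<in> Hspace" "Hnorm p \<le> 1" for p
  proof -
    obtain p1 p2 where pp: "p = (p1, p2)" by (cases p)
    have L1: "p1 \<in> L2" and L2': "p2 \<in> L2" using p pp by (auto simp: Hspace_def)
    have c1: "fst (?T p) = (\<lambda>x. of_real (f (shift x) - f x) * p2 (shift x))"
      by (auto simp: pp commutator_def Dirac_def piop_def Mult_def Koopman_def algebra_simps)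
    have c2: "snd (?T p) = (\<lambda>x. (of_real (f (prepend False x) - f x) * p1 (prepend False x)
        + of_real (f (prepend True x) - f x) * p1 (prepend True x)) / 2)"
      by (auto simp: pp commutator_def Dirac_def piop_def Mult_def Ruelle_def Koopman_def field_simps)
    have "(\<integral>\<^sup>+x. ennreal ((cmod (fst (?T p) x))\<^sup>2) \<partial>mu) \<le> (\<integral>\<^sup>+x. ennreal ((cmod (p2 (shift x)))\<^sup>2) \<partial>mu)"
      unfolding c1 by (intro nn_integral_mono ennreal_leI real_one_bound g1)
    also have "\<dots> = (\<integral>\<^sup>+x. ennreal ((cmod (p2 x))\<^sup>2) \<partial>mu)"
      by (rule mu_shift[OF L2_meas[OF L2']])
    also have "\<dots> = ennreal ((L2norm p2)\<^sup>2)" by (rule L2_nn[OF L2'])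
    finally have "enn2real (\<integral>\<^sup>+x. ennreal ((cmod (fst (?T p) x))\<^sup>2) \<partial>mu) \<le> (L2norm p2)\<^sup>2"
      using enn2real_mono by fastforce
    then have n1: "(L2norm (fst (?T p)))\<^sup>2 \<le> (L2norm p2)\<^sup>2"
      using sq_le_nn[of "fst (?T p)"] by linarith
    have "(\<integral>\<^sup>+x. ennreal ((cmod (snd (?T p) x))\<^sup>2) \<partial>mu) \<le>
        (\<integral>\<^sup>+x. (ennreal ((cmod (p1 (prepend False x)))\<^sup>2) + ennreal ((cmod (p1 (prepend True x)))\<^sup>2)) / 2 \<partial>mu)"
      unfolding c2
    proof (intro nn_integral_mono)
      fix x
      have "(cmod ((of_real (f (prepend False x) - f x) * p1 (prepend False x)
        + of_real (f (prepend True x) - f x) * p1 (prepend True x)) / 2))\<^sup>2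
        \<le> ((cmod (p1 (prepend False x)))\<^sup>2 + (cmod (p1 (prepend True x)))\<^sup>2) / 2"
        using g1[of "prepend False x"] g1[of "prepend True x"] by (intro real_half_bound) auto
      then show "ennreal ((cmod ((of_real (f (prepend False x) - f x) * p1 (prepend False x)
        + of_real (f (prepend True x) - f x) * p1 (prepend True x)) / 2))\<^sup>2)
        \<le> (ennreal ((cmod (p1 (prepend False x)))\<^sup>2) + ennreal ((cmod (p1 (prepend True x)))\<^sup>2)) / 2"
        by (subst ennreal_half[symmetric]) (auto intro: ennreal_leI)
    qed
    also have "\<dots> = (\<integral>\<^sup>+x. ennreal ((cmod (p1 x))\<^sup>2) \<partial>mu)"
      by (rule mu_prepend[OF L2_meas[OF L1], symmetric])
    also have "\<dots> = ennreal ((L2norm p1)\<^sup>2)" by (rule L2_nn[OF L1])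
    finally have "enn2real (\<integral>\<^sup>+x. ennreal ((cmod (snd (?T p) x))\<^sup>2) \<partial>mu) \<le> (L2norm p1)\<^sup>2"
      using enn2real_mono by fastforce
    then have n2: "(L2norm (snd (?T p)))\<^sup>2 \<le> (L2norm p1)\<^sup>2"
      using sq_le_nn[of "snd (?T p)"] by linarith
    have "Hnorm (?T p) \<le> Hnorm p"
    proof -
      have "(L2norm (fst (?T p)))\<^sup>2 + (L2norm (snd (?T p)))\<^sup>2 \<le> (L2norm (fst p))\<^sup>2 + (L2norm (snd p))\<^sup>2"
        using n1 n2 pp by simp
      then show ?thesis unfolding Hnorm_def by (rule real_sqrt_le_mono)
    qed
    with p(2) show ?thesis by linarith
  qed
  have z: "((\<lambda>_. 0), (\<lambda>_. 0)) \<in> Hspace"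
    by (simp add: Hspace_def L2_def)
  show ?thesis
    unfolding opnorm_def
    by (rule cSup_least) (use z bound in auto, force simp: Hnorm_def L2norm_def)
qed

end
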